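(* Let $R$ be a partially colored tree (a trunk) in which every colored vertex is a leaf, with at most one colored vertex and with $|V(R)|\le 7$. Then Alice can win the $3$-Modified Coloring Game on $R$.
   Context: A partial coloring assigns to some vertices colors from a set of $3$ colors so that adjacent colored vertices get different colors; a color is legal for an uncolored vertex $v$ if no neighbor of $v$ has that color. The $k$-Modified Coloring Game ($k$-MCG) on a partially colored graph: Bob and Alice alternate turns, Bob first, each turn coloring an uncolored vertex with a legal color from a set of $k$ colors, except that Bob may choose to pass on any of his turns. Bob wins if at some point an uncolored vertex has no legal color; Alice wins if every vertex becomes colored. A trunk of a partially colored forest $F$ is a maximal connected subgraph of $F$ in which every colored vertex is a leaf. *)

theory Defs
  imports Main
begin

text \<open>A partial coloring is a map col :: 'a => nat option
(None = uncolored).\<close>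

definition simple_graph :: "'a set \<Rightarrow> ('a \<Rightarrow> 'a \<Rightarrow> bool) \<Rightarrow> bool" where
  "simple_graph V E \<longleftrightarrow> finite V \<and> (\<forall>u v. E u v \<longrightarrow> u \<in> V \<and> v \<in> V)
     \<and> (\<forall>u v. E u v \<longrightarrow> E v u) \<and> (\<forall>v. \<not> E v v)"

definition connected_graph :: "'a set \<Rightarrow> ('a \<Rightarrow> 'a \<Rightarrow> bool) \<Rightarrow> bool" where
  "connected_graph V E \<longleftrightarrow> (\<forall>u\<in>V. \<forall>v\<in>V. E\<^sup>*\<^sup>* u v)"

definition is_cycle :: "('a \<Rightarrow> 'a \<Rightarrow> bool) \<Rightarrow> 'a list \<Rightarrow> bool" where
  "is_cycle E cs \<longleftrightarrow> length cs \<ge> 3 \<and> distinct cs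
     \<and> (\<forall>i. Suc i < length cs \<longrightarrow> E (cs ! i) (cs ! Suc i)) \<and> E (last cs) (hd cs)"

definition is_tree :: "'a set \<Rightarrow> ('a \<Rightarrow> 'a \<Rightarrow> bool) \<Rightarrow> bool" where
  "is_tree V E \<longleftrightarrow> simple_graph V E \<and> V \<noteq> {} \<and> connected_graph V E
     \<and> \<not> (\<exists>cs. is_cycle E cs)"

definition degree :: "'a set \<Rightarrow> ('a \<Rightarrow> 'a \<Rightarrow> bool) \<Rightarrow> 'a \<Rightarrow> nat" where
  "degree V E v = card {u \<in> V. E u v}"

definition is_leaf :: "'a set \<Rightarrow> ('a \<Rightarrow> 'a \<Rightarrow> bool) \<Rightarrow> 'a \<Rightarrow> bool" where
  "is_leaf V E v \<longleftrightarrow> degree V E v = 1"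

definition partial_coloring :: "nat \<Rightarrow> 'a set \<Rightarrow> ('a \<Rightarrow> 'a \<Rightarrow> bool) \<Rightarrow> ('a \<Rightarrow> nat option) \<Rightarrow> bool" where
  "partial_coloring k V E col \<longleftrightarrow>
     (\<forall>v c. col v = Some c \<longrightarrow> v \<in> V \<and> c < k)
     \<and> (\<forall>u v c d. E u v \<longrightarrow> col u = Some c \<longrightarrow> col v = Some d \<longrightarrow> c \<noteq> d)"

definition colored_vertices :: "'a set \<Rightarrow> ('a \<Rightarrow> nat option) \<Rightarrow> 'a set" where
  "colored_vertices V col = {v \<in> V. col v \<noteq> None}"

definition legal :: "nat \<Rightarrow> ('a \<Rightarrow> 'a \<Rightarrow> bool) \<Rightarrow> ('a \<Rightarrow> nat option) \<Rightarrow> 'a \<Rightarrow> nat \<Rightarrow> bool" where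
  "legal k E col v c \<longleftrightarrow> c < k \<and> (\<forall>u. E u v \<longrightarrow> col u \<noteq> Some c)"

text \<open>Bob has won: some uncolored vertex has no legal color.\<close>
definition stuck :: "nat \<Rightarrow> 'a set \<Rightarrow> ('a \<Rightarrow> 'a \<Rightarrow> bool) \<Rightarrow> ('a \<Rightarrow> nat option) \<Rightarrow> bool" where
  "stuck k V E col \<longleftrightarrow> (\<exists>v\<in>V. col v = None \<and> \<not> (\<exists>c. legal k E col v c))"

definition complete :: "'a set \<Rightarrow> ('a \<Rightarrow> nat option) \<Rightarrow> bool" where
  "complete V col \<longleftrightarrow> (\<forall>v\<in>V. col v \<noteq> None)"

text \<open>k-Modified Coloring Game. alice_wins_bob_turn k V E col: from position col with Bob
to move, Alice has a strategy guaranteeing that every vertex becomes colored (in finitely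
many moves) without an uncolored vertex ever lacking a legal color. Bob may pass; Alice
may not. Defined as the least fixed point (winning in finitely many rounds; the game is
finite anyway, since every two consecutive turns color at least one vertex).\<close>
inductive alice_wins_bob_turn :: "nat \<Rightarrow> 'a set \<Rightarrow> ('a \<Rightarrow> 'a \<Rightarrow> bool) \<Rightarrow> ('a \<Rightarrow> nat option) \<Rightarrow> bool"
  and alice_wins_alice_turn :: "nat \<Rightarrow> 'a set \<Rightarrow> ('a \<Rightarrow> 'a \<Rightarrow> bool) \<Rightarrow> ('a \<Rightarrow> nat option) \<Rightarrow> bool"
  for k V E where
  bob_done: "complete V col \<Longrightarrow> alice_wins_bob_turn k V E col"
| bob_move: "\<lbrakk> \<not> complete V col; \<not> stuck k V E col;
     alice_wins_alice_turn k V E col;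
     \<And>v c. v \<in> V \<Longrightarrow> col v = None \<Longrightarrow> legal k E col v c \<Longrightarrow>
        alice_wins_alice_turn k V E (col(v := Some c)) \<rbrakk>
   \<Longrightarrow> alice_wins_bob_turn k V E col"
| alice_done: "complete V col \<Longrightarrow> alice_wins_alice_turn k V E col"
| alice_move: "\<lbrakk> \<not> complete V col; \<not> stuck k V E col; v \<in> V; col v = None; legal k E col v c;
     alice_wins_bob_turn k V E (col(v := Some c)) \<rbrakk>
   \<Longrightarrow> alice_wins_alice_turn k V E col"

definition alice_wins_MCG :: "nat \<Rightarrow> 'a set \<Rightarrow> ('a \<Rightarrow> 'a \<Rightarrow> bool) \<Rightarrow> ('a \<Rightarrow> nat option) \<Rightarrow> bool" where
  "alice_wins_MCG k V E col \<longleftrightarrow> alice_wins_bob_turn k V E col"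

end

theory Submission
  imports Defs
begin

definition cset :: "('a \<Rightarrow> 'a \<Rightarrow> bool) \<Rightarrow> ('a \<Rightarrow> nat option) \<Rightarrow> 'a \<Rightarrow> nat set" where
  "cset E col v = {c. \<exists>u. E u v \<and> col u = Some c}"
definition uset :: "('a \<Rightarrow> 'a \<Rightarrow> bool) \<Rightarrow> ('a \<Rightarrow> nat option) \<Rightarrow> 'a \<Rightarrow> 'a set" where
  "uset E col v = {u. E u v \<and> col u = None}"
definition cnb :: "('a \<Rightarrow> 'a \<Rightarrow> bool) \<Rightarrow> ('a \<Rightarrow> nat option) \<Rightarrow> 'a \<Rightarrow> 'a set" where
  "cnb E col v = {u. E u v \<and> col u \<noteq> None}"
definition safe :: "('a \<Rightarrow> 'a \<Rightarrow> bool) \<Rightarrow> ('a \<Rightarrow> nat option) \<Rightarrow> 'a \<Rightarrow> bool" where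
  "safe E col v \<longleftrightarrow> col v \<noteq> None \<or> card (cset E col v) + card (uset E col v) \<le> 2"

lemma card_sub1: "A \<subseteq> {a} \<Longrightarrow> card A \<le> 1"
  using card_mono[of "{a}" A] by simp

lemma IE3:
  assumes "finite A" "finite B" "finite C"
  shows "card (A \<union> B \<union> C) + card (A \<inter> B) + card (A \<inter> C) + card (B \<inter> C)
         = card A + card B + card C + card (A \<inter> B \<inter> C)"
proof -
  have 1: "card (A \<union> B) + card (A \<inter> B) = card A + card B"
    using card_Un_Int[OF assms(1,2)] by simp
  have 2: "card (A \<union> B \<union> C) + card ((A \<union> B) \<inter> C) = card (A \<union> B) + card C"
    using card_Un_Int[of "A \<union> B" C] assms by simp
  have 3: "card ((A \<inter> C) \<union> (B \<inter> C)) + card ((A \<inter> C) \<inter> (B \<inter> C)) = card (A \<inter> C) + card (B \<inter> C)"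
    using card_Un_Int[of "A \<inter> C" "B \<inter> C"] assms by simp
  have e1: "(A \<union> B) \<inter> C = (A \<inter> C) \<union> (B \<inter> C)" by blast
  have e2: "(A \<inter> C) \<inter> (B \<inter> C) = A \<inter> B \<inter> C" by blast
  show ?thesis using 1 2 3 e1 e2 by simp
qed

locale sg =
  fixes V :: "'a set" and E :: "'a \<Rightarrow> 'a \<Rightarrow> bool"
  assumes sg: "simple_graph V E"
begin

lemma fin: "finite V" using sg by (simp add: simple_graph_def)
lemma E_V: "E u v \<Longrightarrow> u \<in> V \<and> v \<in> V" using sg by (simp add: simple_graph_def)
lemma sym: "E u v \<Longrightarrow> E v u" using sg by (simp add: simple_graph_def)
lemma irr: "\<not> E v v" using sg by (simp add: simple_graph_def)

lemma fin_cnb: "finite (cnb E col v)"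
  by (rule finite_subset[OF _ fin]) (auto simp: cnb_def dest: E_V)
lemma fin_uset: "finite (uset E col v)"
  by (rule finite_subset[OF _ fin]) (auto simp: uset_def dest: E_V)
lemma cset_img: "cset E col v = (the \<circ> col) ` cnb E col v"
  by (force simp: cset_def cnb_def)
lemma fin_cset: "finite (cset E col v)"
  using cset_img fin_cnb by simp
lemma card_cset: "card (cset E col v) \<le> card (cnb E col v)"
  using cset_img card_image_le fin_cnb by metis
lemma cnb_sub: "cnb E col v \<subseteq> colored_vertices V col"
  by (auto simp: cnb_def colored_vertices_def dest: E_V)
lemma fin_col: "finite (colored_vertices V col)"
  using fin by (simp add: colored_vertices_def)
lemma card_cset_col: "card (cset E col v) \<le> card (colored_vertices V col)"
  using card_cset card_mono[OF fin_col cnb_sub] le_trans by blast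

lemma legal_ex: "card (cset E col v) \<le> 2 \<Longrightarrow> \<exists>c. legal 3 E col v c"
proof -
  assume a: "card (cset E col v) \<le> 2"
  have "\<not> {0,1,2::nat} \<subseteq> cset E col v"
  proof
    assume "{0,1,2::nat} \<subseteq> cset E col v"
    then have "card {0,1,2::nat} \<le> card (cset E col v)" using card_mono fin_cset by blast
    then show False using a by simp
  qed
  then obtain c where c: "c \<in> {0,1,2::nat}" "c \<notin> cset E col v" by blast
  have "c < 3" using c(1) by auto
  moreover have "\<forall>u. E u v \<longrightarrow> col u \<noteq> Some c" using c(2) unfolding cset_def by blast
  ultimately have "legal 3 E col v c" by (simp add: legal_def)
  then show ?thesis by blast
qed

lemma cset_upd: "col w = None \<Longrightarrow>
  cset E (col(w:=Some c)) v = (if E w v then insert c (cset E col v) else cset E col v)"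
  unfolding cset_def by (auto, metis option.distinct(1))

lemma uset_upd: "uset E (col(w:=Some c)) v = uset E col v - {w}"
  by (auto simp: uset_def)

lemma safe_upd: assumes "safe E col v" "col w = None"
  shows "safe E (col(w:=Some c)) v"
proof (cases "v = w")
  case True then show ?thesis by (simp add: safe_def)
next
  case False
  show ?thesis
  proof (cases "col v = None")
    case False' : False
    then show ?thesis using \<open>v \<noteq> w\<close> by (simp add: safe_def)
  next
    case True
    then have s: "card (cset E col v) + card (uset E col v) \<le> 2" using assms(1) by (simp add: safe_def)
    show ?thesis
    proof (cases "E w v")
      case True
      have "w \<in> uset E col v" using True assms(2) by (simp add: uset_def)
      then have "card (uset E (col(w:=Some c)) v) = card (uset E col v) - 1"
        using uset_upd fin_uset by simp
      moreover have "card (cset E (col(w:=Some c)) v) \<le> card (cset E col v) + 1"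
        using cset_upd[of col w c v, OF assms(2)] True card_insert_le_m1 fin_cset
        by (simp add: card_insert_if)
      moreover have "card (uset E col v) \<ge> 1" using \<open>w \<in> uset E col v\<close> fin_uset
        by (metis One_nat_def Suc_leI card_gt_0_iff empty_iff)
      ultimately show ?thesis using s unfolding safe_def by linarith
    next
      case False
      then have "w \<notin> uset E col v" by (simp add: uset_def)
      then have "uset E (col(w:=Some c)) v = uset E col v" using uset_upd by simp
      moreover have "cset E (col(w:=Some c)) v = cset E col v" using cset_upd[of col w c v, OF assms(2)] False by simp
      ultimately show ?thesis using s by (simp add: safe_def)
    qed
  qed
qed

lemma safe_all_upd: "\<forall>v\<in>V. v \<noteq> b \<longrightarrow> safe E col v \<Longrightarrow> col b = None \<Longrightarrow>
   \<forall>v\<in>V. safe E (col(b:=Some c)) v"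
  by (metis fun_upd_same option.distinct(1) safe_def safe_upd)

lemma not_stuck: "(\<forall>v\<in>V. col v = None \<longrightarrow> card (cset E col v) \<le> 2) \<Longrightarrow> \<not> stuck 3 V E col"
  unfolding stuck_def using legal_ex by blast

lemma W1: "\<forall>v\<in>V. safe E col v \<Longrightarrow>
   alice_wins_alice_turn 3 V E col \<and> alice_wins_bob_turn 3 V E col"
proof (induction "card {v\<in>V. col v = None}" arbitrary: col rule: less_induct)
  case less
  have dec: "card {v'\<in>V. (col(w:=Some c)) v' = None} < card {v\<in>V. col v = None}"
    if "w \<in> V" "col w = None" for w c
  proof -
    have "{v'\<in>V. (col(w:=Some c)) v' = None} = {v\<in>V. col v = None} - {w}" by auto
    moreover have "finite {v\<in>V. col v = None}" using fin by simp
    moreover have "card ({v\<in>V. col v = None} - {w}) < card {v\<in>V. col v = None}"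
      using that \<open>finite {v\<in>V. col v = None}\<close> by (intro card_Diff1_less) auto
    ultimately show ?thesis by simp
  qed
  have ns: "\<not> stuck 3 V E col"
    using less.prems by (intro not_stuck) (auto simp: safe_def)
  have A: "alice_wins_alice_turn 3 V E col"
  proof (cases "complete V col")
    case True then show ?thesis by (rule alice_done)
  next
    case False
    then obtain w where w: "w \<in> V" "col w = None" by (auto simp: complete_def)
    have "card (cset E col w) \<le> 2" using less.prems w by (auto simp: safe_def)
    then obtain c where c: "legal 3 E col w c" using legal_ex by blast
    have "\<forall>v\<in>V. safe E (col(w:=Some c)) v" using less.prems safe_upd w(2) by simp
    then have "alice_wins_bob_turn 3 V E (col(w:=Some c))" using less.hyps[OF dec[OF w]] by blast
    then show ?thesis by (rule alice_move[OF False ns w c])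
  qed
  have B: "alice_wins_bob_turn 3 V E col"
  proof (cases "complete V col")
    case True then show ?thesis by (rule bob_done)
  next
    case False
    show ?thesis
    proof (rule bob_move[OF False ns A])
      fix v c assume v: "v \<in> V" "col v = None" "legal 3 E col v c"
      have "\<forall>u\<in>V. safe E (col(v:=Some c)) u" using less.prems safe_upd v(2) by simp
      then show "alice_wins_alice_turn 3 V E (col(v:=Some c))" using less.hyps[OF dec[OF v(1,2)]] by blast
    qed
  qed
  show ?case using A B by blast
qed

lemma W2': assumes "\<forall>v\<in>V. v \<noteq> b \<longrightarrow> safe E col v" "b \<in> V" "col b = None"
   "card (cset E col b) \<le> 2"
  shows "alice_wins_alice_turn 3 V E col"
proof -
  obtain c where c: "legal 3 E col b c" using legal_ex assms(4) by blast
  have ns: "\<not> stuck 3 V E col"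
    using assms by (intro not_stuck) (auto simp: safe_def)
  have nc: "\<not> complete V col" using assms by (auto simp: complete_def)
  have "\<forall>v\<in>V. safe E (col(b:=Some c)) v"
    using assms safe_all_upd by blast
  then have "alice_wins_bob_turn 3 V E (col(b:=Some c))" using W1 by blast
  then show ?thesis by (rule alice_move[OF nc ns assms(2,3) c])
qed

lemma W2: assumes "\<forall>v\<in>V. v \<noteq> b \<longrightarrow> safe E col v" "b \<in> V" "card (cset E col b) \<le> 1"
  shows "alice_wins_bob_turn 3 V E col"
proof (cases "col b = None")
  case False
  then have "\<forall>v\<in>V. safe E col v" using assms by (auto simp: safe_def)
  then show ?thesis using W1 by blast
next
  case True
  have ns: "\<not> stuck 3 V E col"
    using assms by (intro not_stuck) (auto simp: safe_def)
  have nc: "\<not> complete V col" using assms True by (auto simp: complete_def)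
  have A: "alice_wins_alice_turn 3 V E col" using W2' assms True by simp
  show ?thesis
  proof (rule bob_move[OF nc ns A])
    fix v c assume v: "v \<in> V" "col v = None" "legal 3 E col v c"
    show "alice_wins_alice_turn 3 V E (col(v:=Some c))"
    proof (cases "v = b")
      case True
      then have "\<forall>u\<in>V. safe E (col(v:=Some c)) u" using assms safe_all_upd v by blast
      then show ?thesis using W1 by blast
    next
      case False
      have "card (cset E (col(v:=Some c)) b) \<le> 2"
        using cset_upd[of col v c b, OF v(2)] assms(3) fin_cset card_insert_le_m1
        by (auto simp: card_insert_if)
      moreover have "\<forall>u\<in>V. u \<noteq> b \<longrightarrow> safe E (col(v:=Some c)) u" using assms safe_upd v by blast
      ultimately show ?thesis using W2' assms False True by simp
    qed
  qed
qed


lemma move1: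
  assumes "bi \<noteq> bj" "bi \<in> V" "bj \<in> V" "col bi = None" "legal 3 E col bi c"
    "\<forall>v\<in>V. v \<noteq> bi \<longrightarrow> v \<noteq> bj \<longrightarrow> safe E col v"
    "card (if E bi bj then insert c (cset E col bj) else cset E col bj) \<le> 1"
  shows "\<exists>w c. w \<in> V \<and> col w = None \<and> legal 3 E col w c \<and>
    (\<exists>b\<in>V. (\<forall>v\<in>V. v \<noteq> b \<longrightarrow> safe E (col(w:=Some c)) v) \<and> card (cset E (col(w:=Some c)) b) \<le> 1)"
proof -
  have 1: "\<forall>v\<in>V. v \<noteq> bj \<longrightarrow> safe E (col(bi:=Some c)) v"
  proof (intro ballI impI)
    fix v assume v: "v \<in> V" "v \<noteq> bj"
    show "safe E (col(bi:=Some c)) v"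
    proof (cases "v = bi")
      case True then show ?thesis by (simp add: safe_def)
    next
      case False then show ?thesis using assms(6) v safe_upd assms(4) by blast
    qed
  qed
  have 2: "card (cset E (col(bi:=Some c)) bj) \<le> 1"
    using cset_upd[of col bi c bj, OF assms(4)] assms(7) by simp
  show ?thesis
    apply (rule exI[of _ bi], rule exI[of _ c])
    using 1 2 assms(2,3,4,5) by blast
qed

end

lemma card2: "card {a, b} \<le> 2" by (cases "a = b") auto

locale tree7 = sg +
  assumes notri: "E a b \<Longrightarrow> E b c \<Longrightarrow> E c a \<Longrightarrow> False"
    and nosq: "E a b \<Longrightarrow> E b c \<Longrightarrow> E c d \<Longrightarrow> E d a \<Longrightarrow> a \<noteq> c \<Longrightarrow> b \<noteq> d \<Longrightarrow> False"
    and small: "card V \<le> 7"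
begin

abbreviation nb :: "'a \<Rightarrow> 'a set" where "nb v \<equiv> {u. E u v}"
abbreviation cl :: "'a \<Rightarrow> 'a set" where "cl v \<equiv> insert v (nb v)"

lemma fin_nb: "finite (nb v)"
  by (rule finite_subset[OF _ fin]) (auto dest: E_V)
lemma cl_sub: "v \<in> V \<Longrightarrow> cl v \<subseteq> V" by (auto dest: E_V)
lemma card_cl: "card (cl v) = Suc (card (nb v))"
  using fin_nb irr by simp
lemma fin_cl: "finite (cl v)" using fin_nb by simp

lemma pair: assumes "x \<noteq> y" shows "card (cl x \<inter> cl y) \<le> (if E x y then 2 else 1)"
proof (cases "E x y")
  case True
  have "cl x \<inter> cl y \<subseteq> {x, y}"
  proof
    fix w assume w: "w \<in> cl x \<inter> cl y"
    show "w \<in> {x, y}"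
    proof (rule ccontr)
      assume "w \<notin> {x, y}"
      then have "E w x" "E w y" using w by auto
      then show False using notri[of x y w] True sym by blast
    qed
  qed
  then have "card (cl x \<inter> cl y) \<le> card {x, y}" by (intro card_mono) auto
  then show ?thesis using True card2[of x y] by simp
next
  case False
  have sub: "cl x \<inter> cl y \<subseteq> nb x \<inter> nb y"
    using False assms sym by auto
  have "card (nb x \<inter> nb y) \<le> Suc 0"
  proof (subst card_le_Suc0_iff_eq)
    show "finite (nb x \<inter> nb y)" using fin_nb by simp
    show "\<forall>a\<in>nb x \<inter> nb y. \<forall>b\<in>nb x \<inter> nb y. a = b"
    proof (intro ballI, rule ccontr)
      fix a b assume ab: "a \<in> nb x \<inter> nb y" "b \<in> nb x \<inter> nb y" "a \<noteq> b"
      then have "E x a" "E a y" "E y b" "E b x" using sym by auto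
      then show False using nosq[of x a y b] assms ab(3) by blast
    qed
  qed
  then have "card (cl x \<inter> cl y) \<le> 1"
    using card_mono[OF _ sub] fin_nb by (simp add: le_trans)
  then show ?thesis using False by simp
qed

lemma two: assumes "b1 \<noteq> b2" "b1 \<in> V" "b2 \<in> V" "4 \<le> card (nb b1)" "4 \<le> card (nb b2)"
  shows False
proof -
  have "card (cl b1) + card (cl b2) = card (cl b1 \<union> cl b2) + card (cl b1 \<inter> cl b2)"
    using card_Un_Int fin_cl by blast
  moreover have "card (cl b1 \<union> cl b2) \<le> 7"
    using card_mono[OF fin, of "cl b1 \<union> cl b2"] cl_sub assms small by auto
  moreover have "card (cl b1 \<inter> cl b2) \<le> 2" using pair[OF assms(1)] by (auto split: if_splits)
  ultimately show False using card_cl assms by simp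
qed

lemma three: assumes "b1 \<noteq> b2" "b1 \<noteq> b3" "b2 \<noteq> b3" "b1 \<in> V" "b2 \<in> V" "b3 \<in> V"
  "3 \<le> card (nb b1)" "3 \<le> card (nb b2)" "3 \<le> card (nb b3)"
  shows False
proof -
  have ie: "card (cl b1 \<union> cl b2 \<union> cl b3) + card (cl b1 \<inter> cl b2) + card (cl b1 \<inter> cl b3)
      + card (cl b2 \<inter> cl b3) = card (cl b1) + card (cl b2) + card (cl b3) + card (cl b1 \<inter> cl b2 \<inter> cl b3)"
    using IE3 fin_cl by blast
  have u: "card (cl b1 \<union> cl b2 \<union> cl b3) \<le> 7"
    using card_mono[OF fin, of "cl b1 \<union> cl b2 \<union> cl b3"] cl_sub assms small by auto
  have p12: "card (cl b1 \<inter> cl b2) \<le> (if E b1 b2 then 2 else 1)" using pair assms by blast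
  have p13: "card (cl b1 \<inter> cl b3) \<le> (if E b1 b3 then 2 else 1)" using pair assms by blast
  have p23: "card (cl b2 \<inter> cl b3) \<le> (if E b2 b3 then 2 else 1)" using pair assms by blast
  have nt: "\<not> (E b1 b2 \<and> E b1 b3 \<and> E b2 b3)" using notri[of b1 b2 b3] sym by blast
  have fin3: "finite (cl b1 \<inter> cl b2 \<inter> cl b3)" using fin_cl by blast
  have t: "card (cl b1 \<inter> cl b2 \<inter> cl b3) \<ge> 1"
    if "(E b1 b2 \<and> E b1 b3) \<or> (E b1 b2 \<and> E b2 b3) \<or> (E b1 b3 \<and> E b2 b3)"
  proof -
    have "cl b1 \<inter> cl b2 \<inter> cl b3 \<noteq> {}" using that sym by blast
    then show ?thesis using fin3 by (simp add: Suc_leI card_gt_0_iff)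
  qed
  have c: "card (cl b1) \<ge> 4" "card (cl b2) \<ge> 4" "card (cl b3) \<ge> 4" using card_cl assms by auto
  show False
  proof (cases "(E b1 b2 \<and> E b1 b3) \<or> (E b1 b2 \<and> E b2 b3) \<or> (E b1 b3 \<and> E b2 b3)")
    case True
    then have "card (cl b1 \<inter> cl b2) + card (cl b1 \<inter> cl b3) + card (cl b2 \<inter> cl b3) \<le> 5"
      using p12 p13 p23 nt by (auto split: if_splits)
    then show False using ie u c t[OF True] by linarith
  next
    case False
    then have "card (cl b1 \<inter> cl b2) + card (cl b1 \<inter> cl b3) + card (cl b2 \<inter> cl b3) \<le> 4"
      using p12 p13 p23 by (auto split: if_splits)
    then show False using ie u c by linarith
  qed
qed


lemma fix_move:
  assumes b: "b1 \<noteq> b2" "b1 \<in> V" "b2 \<in> V" "col b1 = None" "col b2 = None"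
    and oth: "\<forall>v\<in>V. v \<noteq> b1 \<longrightarrow> v \<noteq> b2 \<longrightarrow> safe E col v"
    and cv: "card (colored_vertices V col) \<le> 2"
    and val: "\<forall>v c. col v = Some c \<longrightarrow> c < 3"
    and d3: "card (nb b2) = 3"
  shows "\<exists>w c. w \<in> V \<and> col w = None \<and> legal 3 E col w c \<and>
    (\<exists>b\<in>V. (\<forall>v\<in>V. v \<noteq> b \<longrightarrow> safe E (col(w:=Some c)) v) \<and> card (cset E (col(w:=Some c)) b) \<le> 1)"
proof -
  have oth': "\<forall>v\<in>V. v \<noteq> b2 \<longrightarrow> v \<noteq> b1 \<longrightarrow> safe E col v" using oth by blast
  have "card (cset E col b1) \<le> 2" using card_cset_col cv le_trans by blast
  then obtain c1 where l1: "legal 3 E col b1 c1" using legal_ex by blast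
  have "card (cset E col b2) \<le> 2" using card_cset_col cv le_trans by blast
  then obtain c2 where l2: "legal 3 E col b2 c2" using legal_ex by blast
  show ?thesis
  proof (cases "cset E col b2 = {}")
    case True
    show ?thesis by (rule move1[OF b(1,2,3,4) l1 oth]) (simp add: True)
  next
    case n2: False
    show ?thesis
    proof (cases "cset E col b1 = {}")
      case True
      show ?thesis by (rule move1[OF b(1)[symmetric] b(3,2,5) l2 oth']) (simp add: True)
    next
      case n1: False
      show ?thesis
      proof (cases "E b1 b2")
        case nadj: False
        have nadj': "\<not> E b2 b1" using nadj sym[of b2 b1] by blast
        show ?thesis
        proof (cases "card (cset E col b2) \<le> 1")
          case T2: True
          show ?thesis by (rule move1[OF b(1,2,3,4) l1 oth]) (simp only: nadj if_False, rule T2)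
        next
          case F2: False
          show ?thesis
          proof (cases "card (cset E col b1) \<le> 1")
            case T1: True
            show ?thesis by (rule move1[OF b(1)[symmetric] b(3,2,5) l2 oth']) (simp only: nadj' if_False, rule T1)
          next
            case F1: False
            have e1: "cnb E col b1 = colored_vertices V col"
              using card_seteq[OF fin_col cnb_sub] card_cset[of col b1] F1 cv by simp
            have e2: "cnb E col b2 = colored_vertices V col"
              using card_seteq[OF fin_col cnb_sub] card_cset[of col b2] F2 cv by simp
            have "\<not> card (colored_vertices V col) \<le> Suc 0"
              using F1 card_cset[of col b1] e1 by simp
            then obtain p q where pq: "p \<in> colored_vertices V col" "q \<in> colored_vertices V col" "p \<noteq> q"
              using card_le_Suc0_iff_eq[OF fin_col] by blast
            then have "E p b1" "E p b2" "E q b1" "E q b2" using e1 e2 by (auto simp: cnb_def)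
            then have False using nosq[of b1 p b2 q] sym[of p b1] sym[of q b2] b(1) pq(3) by blast
            then show ?thesis by blast
          qed
        qed
      next
        case adj: True
        obtain a1 y where y: "E y b1" "col y = Some a1" using n1 by (auto simp: cset_def)
        obtain a2 x where x: "E x b2" "col x = Some a2" using n2 by (auto simp: cset_def)
        have xy: "x \<noteq> y" using notri[OF adj sym[OF x(1)]] y(1) by blast
        have xyV: "x \<in> V" "y \<in> V" using x y E_V by auto
        have "{x, y} \<subseteq> colored_vertices V col" using xyV x y by (auto simp: colored_vertices_def)
        then have colset: "colored_vertices V col = {x, y}"
          using card_seteq[OF fin_col] cv xy by (metis card_2_iff)
        have only1: "u = y" if "E u b1" "col u \<noteq> None" for u
        proof -
          have "u \<in> {x, y}" using that E_V colset by (auto simp: colored_vertices_def)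
          moreover have "u \<noteq> x" using that notri[OF adj sym[OF x(1)]] by blast
          ultimately show ?thesis by blast
        qed
        have only2: "u = x" if "E u b2" "col u \<noteq> None" for u
        proof -
          have "u \<in> {x, y}" using that E_V colset by (auto simp: colored_vertices_def)
          moreover have "u \<noteq> y" using that notri[OF adj _ y(1)] sym[of y b2] by blast
          ultimately show ?thesis by blast
        qed
        have cs1: "cset E col b1 \<subseteq> {a1}" using only1 y by (auto simp: cset_def)
        have cs2: "cset E col b2 \<subseteq> {a2}" using only2 x by (auto simp: cset_def)
        show ?thesis
        proof (cases "a1 = a2")
          case False
          have "legal 3 E col b1 a2"
            unfolding legal_def using val x only1 y False by fastforce
          moreover have "card (if E b1 b2 then insert a2 (cset E col b2) else cset E col b2) \<le> 1"
            using adj cs2 by (intro card_sub1[of _ a2]) auto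
          ultimately show ?thesis using move1[OF b(1,2,3,4) _ oth] by blast
        next
          case True
          define a where "a = a2"
          have "\<not> nb b2 \<subseteq> {b1, x}"
          proof
            assume "nb b2 \<subseteq> {b1, x}"
            then have "card (nb b2) \<le> card {b1, x}" by (intro card_mono) auto
            then show False using d3 card2[of b1 x] by simp
          qed
          then obtain z where z: "E z b2" "z \<noteq> b1" "z \<noteq> x" by blast
          have b1x: "b1 \<noteq> x" using b(4) x by auto
          have "{b1, x, z} \<subseteq> nb b2" using adj x z by auto
          moreover have "card {b1, x, z} = 3" using b1x z by simp
          ultimately have nbeq: "nb b2 = {b1, x, z}"
            using card_seteq[OF fin_nb] d3 by (metis order_refl)
          have zy: "z \<noteq> y" using only2 z y xy by auto
          have zV: "z \<in> V" using z E_V by auto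
          have zunc: "col z = None"
          proof (rule ccontr)
            assume "col z \<noteq> None"
            then have "z \<in> {x, y}" using colset zV by (auto simp: colored_vertices_def)
            then show False using z zy by auto
          qed
          have znb1: "\<not> E z b1" using notri[OF adj sym[OF z(1)]] by blast
          have la: "legal 3 E col z a"
            unfolding legal_def
          proof (intro conjI allI impI)
            show "a < 3" using val x a_def by blast
          next
            fix u assume u: "E u z"
            show "col u \<noteq> Some a"
            proof
              assume cu: "col u = Some a"
              then have "u \<in> {x, y}" using colset u E_V by (auto simp: colored_vertices_def)
              moreover have "u \<noteq> x" using notri[OF _ z(1) sym[OF x(1)]] u by blast
              moreover have "u \<noteq> y"
              proof
                assume "u = y"
                moreover have "y \<noteq> b2" using y(2) b(5) by auto
                ultimately show False using nosq[OF _ z(1) sym[OF adj] sym[OF y(1)]] u z(2) by blast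
              qed
              ultimately show False by blast
            qed
          qed
          let ?col = "col(z:=Some a)"
          have sf: "\<forall>v\<in>V. v \<noteq> b1 \<longrightarrow> safe E ?col v"
          proof (intro ballI impI)
            fix v assume v: "v \<in> V" "v \<noteq> b1"
            show "safe E ?col v"
            proof (cases "v = z")
              case True then show ?thesis by (simp add: safe_def)
            next
              case vz: False
              show ?thesis
              proof (cases "v = b2")
                case True
                have "cset E ?col b2 \<subseteq> {a}"
                  using cset_upd[of col z a b2, OF zunc] z cs2 a_def by auto
                then have c1: "card (cset E ?col b2) \<le> 1" by (rule card_sub1)
                have "uset E ?col b2 \<subseteq> {b1}"
                proof
                  fix u assume u: "u \<in> uset E ?col b2"
                  then have "u \<in> uset E col b2" "u \<noteq> z" using uset_upd[of col z a b2] by auto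
                  then have uu: "E u b2" "col u = None" "u \<noteq> z" by (auto simp: uset_def)
                  then have "u \<in> nb b2" by simp
                  then have "u \<in> {b1, x, z}" using nbeq by simp
                  then show "u \<in> {b1}" using uu x(2) by auto
                qed
                then have c2: "card (uset E ?col b2) \<le> 1" by (rule card_sub1)
                show ?thesis using True c1 c2 by (simp add: safe_def)
              next
                case False
                then show ?thesis using oth v safe_upd zunc by blast
              qed
            qed
          qed
          have "cset E ?col b1 \<subseteq> {a}"
            using cset_upd[of col z a b1, OF zunc] znb1 cs1 True a_def by auto
          then have "card (cset E ?col b1) \<le> 1" by (rule card_sub1)
          then show ?thesis using sf zV zunc la b(2) by blast
        qed
      qed
    qed
  qed
qed


lemma unsafe_deg: assumes "v \<in> V" "\<not> safe E col v"
  shows "col v = None \<and> 3 \<le> card (nb v)"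
proof -
  have cv: "col v = None" and s: "card (cset E col v) + card (uset E col v) > 2"
    using assms by (auto simp: safe_def)
  have "nb v = cnb E col v \<union> uset E col v" by (auto simp: cnb_def uset_def)
  moreover have "cnb E col v \<inter> uset E col v = {}" by (auto simp: cnb_def uset_def)
  ultimately have "card (nb v) = card (cnb E col v) + card (uset E col v)"
    using card_Un_disjoint fin_cnb fin_uset by metis
  then show ?thesis using cv s card_cset[of col v] by linarith
qed

lemma K: assumes cv: "card (colored_vertices V col) \<le> 2"
    and val: "\<forall>v c. col v = Some c \<longrightarrow> c < 3"
  shows "alice_wins_alice_turn 3 V E col"
proof (cases "complete V col")
  case True then show ?thesis by (rule alice_done)
next
  case nc: False
  have c2: "card (cset E col v) \<le> 2" for v using card_cset_col cv le_trans by blast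
  have ns: "\<not> stuck 3 V E col" using c2 not_stuck by blast
  have suff: "\<exists>w c. w \<in> V \<and> col w = None \<and> legal 3 E col w c \<and> alice_wins_bob_turn 3 V E (col(w:=Some c))"
  proof -
    define X where "X = {v\<in>V. \<not> safe E col v}"
    have Xf: "col v = None \<and> 3 \<le> card (nb v) \<and> v \<in> V" if "v \<in> X" for v
      using unsafe_deg that X_def by blast
    show ?thesis
    proof (cases "X = {}")
      case True
      then have allsafe: "\<forall>v\<in>V. safe E col v" using X_def by blast
      obtain w where w: "w \<in> V" "col w = None" using nc by (auto simp: complete_def)
      obtain c where c: "legal 3 E col w c" using legal_ex c2 by blast
      have "\<forall>v\<in>V. safe E (col(w:=Some c)) v" using allsafe safe_upd w(2) by simp
      then have "alice_wins_bob_turn 3 V E (col(w:=Some c))" using W1 by blast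
      then show ?thesis using w c by blast
    next
      case False
      then obtain b1 where b1: "b1 \<in> X" by blast
      show ?thesis
      proof (cases "X \<subseteq> {b1}")
        case True
        have o: "\<forall>v\<in>V. v \<noteq> b1 \<longrightarrow> safe E col v" using True X_def by blast
        have u1: "col b1 = None" "b1 \<in> V" using Xf[OF b1] by auto
        obtain c where c: "legal 3 E col b1 c" using legal_ex c2 by blast
        have "\<forall>v\<in>V. safe E (col(b1:=Some c)) v" using safe_all_upd[OF o u1(1)] by blast
        then have "alice_wins_bob_turn 3 V E (col(b1:=Some c))" using W1 by blast
        then show ?thesis using u1 c by blast
      next
        case False
        then obtain b2 where b2: "b2 \<in> X" "b2 \<noteq> b1" by blast
        have sub: "X \<subseteq> {b1, b2}"
        proof
          fix b3 assume b3: "b3 \<in> X"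
          show "b3 \<in> {b1, b2}"
          proof (rule ccontr)
            assume "b3 \<notin> {b1, b2}"
            then show False using three[of b1 b2 b3] Xf[OF b1] Xf[OF b2(1)] Xf[OF b3] b2(2) by auto
          qed
        qed
        have o: "\<forall>v\<in>V. v \<noteq> b1 \<longrightarrow> v \<noteq> b2 \<longrightarrow> safe E col v" using sub X_def by blast
        have o': "\<forall>v\<in>V. v \<noteq> b2 \<longrightarrow> v \<noteq> b1 \<longrightarrow> safe E col v" using o by blast
        have f1: "col b1 = None" "3 \<le> card (nb b1)" "b1 \<in> V" using Xf[OF b1] by auto
        have f2: "col b2 = None" "3 \<le> card (nb b2)" "b2 \<in> V" using Xf[OF b2(1)] by auto
        have "card (nb b1) = 3 \<or> card (nb b2) = 3"
        proof (rule ccontr)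
          assume "\<not> (card (nb b1) = 3 \<or> card (nb b2) = 3)"
          then have "4 \<le> card (nb b1)" "4 \<le> card (nb b2)" using f1 f2 by auto
          then show False using two[of b1 b2] f1 f2 b2(2) by auto
        qed
        then obtain w c where wc: "w \<in> V" "col w = None" "legal 3 E col w c"
          and G: "\<exists>b\<in>V. (\<forall>v\<in>V. v \<noteq> b \<longrightarrow> safe E (col(w:=Some c)) v) \<and> card (cset E (col(w:=Some c)) b) \<le> 1"
        proof
          assume "card (nb b1) = 3"
          then show ?thesis using fix_move[OF b2(2) f2(3) f1(3) f2(1) f1(1) o' cv val] that by blast
        next
          assume "card (nb b2) = 3"
          then show ?thesis using fix_move[OF b2(2)[symmetric] f1(3) f2(3) f1(1) f2(1) o cv val] that by blast
        qed
        from G obtain b where "b \<in> V" "\<forall>v\<in>V. v \<noteq> b \<longrightarrow> safe E (col(w:=Some c)) v"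
          "card (cset E (col(w:=Some c)) b) \<le> 1" by blast
        then have "alice_wins_bob_turn 3 V E (col(w:=Some c))" using W2 by blast
        then show ?thesis using wc by blast
      qed
    qed
  qed
  then obtain w c where "w \<in> V" "col w = None" "legal 3 E col w c"
    "alice_wins_bob_turn 3 V E (col(w:=Some c))" by blast
  then show ?thesis using alice_move[OF nc ns] by blast
qed

end

theorem lemma5p4:
  fixes V :: "'a set" and E :: "'a \<Rightarrow> 'a \<Rightarrow> bool" and col :: "'a \<Rightarrow> nat option"
  assumes "is_tree V E"
    and "partial_coloring 3 V E col"
    and "\<forall>v \<in> colored_vertices V col. is_leaf V E v"
    and "card (colored_vertices V col) \<le> 1"
    and "card V \<le> 7"
  shows "alice_wins_MCG 3 V E col"
proof -
  have sgV: "simple_graph V E" and nc: "\<not> (\<exists>cs. is_cycle E cs)"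
    using assms(1) by (auto simp: is_tree_def)
  interpret sg V E by (rule sg.intro[OF sgV])
  have t: "tree7 V E"
  proof (unfold_locales)
    fix a b c assume e: "E a b" "E b c" "E c a"
    have "a \<noteq> b" "b \<noteq> c" "a \<noteq> c" using e irr by metis+
    then have "is_cycle E [a, b, c]" using e by (auto simp: is_cycle_def less_Suc_eq nth_Cons')
    then show False using nc by blast
  next
    fix a b c d assume e: "E a b" "E b c" "E c d" "E d a" "a \<noteq> c" "b \<noteq> d"
    have "a \<noteq> b" "b \<noteq> c" "c \<noteq> d" "d \<noteq> a" using e irr by metis+
    then have "is_cycle E [a, b, c, d]" using e by (auto simp: is_cycle_def less_Suc_eq nth_Cons')
    then show False using nc by blast
  next
    show "card V \<le> 7" by (rule assms(5))
  qed
  interpret tree7 V E by (rule t)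
  have val: "\<forall>v c. col v = Some c \<longrightarrow> c < 3" using assms(2) by (auto simp: partial_coloring_def)
  have cv: "card (colored_vertices V col) \<le> 2" using assms(4) by simp
  show ?thesis unfolding alice_wins_MCG_def
  proof (cases "complete V col")
    case True then show "alice_wins_bob_turn 3 V E col" by (rule bob_done)
  next
    case F: False
    have "card (cset E col v) \<le> 2" for v using card_cset_col cv le_trans by blast
    then have ns: "\<not> stuck 3 V E col" using not_stuck by blast
    have A: "alice_wins_alice_turn 3 V E col" using K[OF cv val] .
    show "alice_wins_bob_turn 3 V E col"
    proof (rule bob_move[OF F ns A])
      fix v c assume v: "v \<in> V" "col v = None" "legal 3 E col v c"
      have "colored_vertices V (col(v:=Some c)) = insert v (colored_vertices V col)"
        using v by (auto simp: colored_vertices_def)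
      then have "card (colored_vertices V (col(v:=Some c))) \<le> 2"
        using card_insert_le_m1 fin_col assms(4) by (simp add: card_insert_if)
      moreover have "\<forall>u d. (col(v:=Some c)) u = Some d \<longrightarrow> d < 3"
        using val v(3) by (auto simp: legal_def)
      ultimately show "alice_wins_alice_turn 3 V E (col(v:=Some c))" using K by blast
    qed
  qed
qed

end
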